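(* Let $s\in(\frac12,1)$, $N\ge2$, and let $\Gamma_1,\Gamma_2,\Omega,U$, $L$ and $C^+$ be as in the context. Then $U(x+y)\ge U(x)$ for all $x\in\mathbb R^N$ and all $y\in C^+$.
   Context: Notation: $S^{N-1}$ unit sphere. $\phi\in C^{1,1}(x_0)$ means there are $p\in\mathbb R^N$, $M,\eta_0>0$ with $|\phi(x_0+x)-\phi(x_0)-p\cdot x|\le M|x|^2$ for $|x|<\eta_0$; $\nabla\phi(x_0):=p$. Infinity fractional Laplacian: if $\nabla\phi(x)\ne0$, $v=\nabla\phi(x)/|\nabla\phi(x)|$, $\Delta^s_\infty\phi(x)=\int_0^\infty\frac{\phi(x+\eta v)+\phi(x-\eta v)-2\phi(x)}{\eta^{1+2s}}d\eta$; if $\nabla\phi(x)=0$, $\Delta^s_\infty\phi(x)=\sup_{y\in S^{N-1}}\int_0^\infty\frac{\phi(x+\eta y)-\phi(x)}{\eta^{1+2s}}d\eta+\inf_{z\in S^{N-1}}\int_0^\infty\frac{\phi(x-\eta z)-\phi(x)}{\eta^{1+2s}}d\eta$. An upper semicontinuous $u$ is a subsolution at $x_0$ if whenever $r>0$, $\phi\in C^{1,1}(x_0)\cap C(\overline{B_r(x_0)})$, $\phi(x_0)=u(x_0)$, $\phi>u$ on $B_r(x_0)\setminus\{x_0\}$, the function $\tilde u$ equal to $\phi$ on $B_r(x_0)$ and $u$ elsewhere satisfies $\Delta^s_\infty\tilde u(x_0)\ge0$. Setting: $x=(x_1,\hat x)$, $\hat x\in\mathbb R^{N-1}$; $\Gamma_1,\Gamma_2:\mathbb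 R^{N-1}\to\mathbb R$ are $C^{1,1}$ with $0\le\Gamma_1\le\Gamma_2\le M$, $\Gamma_2-\Gamma_1\ge m$ for constants $M>m>0$, and $\sup_{\hat x}|\partial_k\Gamma_i|+|\partial_l\partial_k\Gamma_i|\le C_1$ for all $i,k,l$. $L$ is a common Lipschitz constant of $\Gamma_1,\Gamma_2$, $\theta=\operatorname{arccot}(L)\in(0,\pi/2)$, $C^+=\{x\ne0:\cos\theta<x\cdot e_1/|x|\le1\}$. $\Omega=\{\Gamma_1(\hat x)<x_1<\Gamma_2(\hat x)\}$, $\Omega^{c,-}=\{x_1\le\Gamma_1(\hat x)\}$, $\Omega^{c,+}=\{x_1\ge\Gamma_2(\hat x)\}$. $\mathcal F$ is the set of upper semicontinuous $u:\mathbb R^N\to\mathbb R$, continuous in $\Omega$, that are subsolutions at every point of $\Omega$ and satisfy $u\le0$ on $\Omega^{c,-}$, $u\le1$ on $\Omega\cup\Omega^{c,+}$; $U=\sup_{u\in\mathcal F}u$ pointwise. *)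

theory Defs
  imports "HOL-Analysis.Analysis"
begin

text \<open>Points of R^N are written as pairs (x1, xhat) with xhat :: real^'m,
  so N = 1 + CARD('m) \<ge> 2. The Euclidean structure of the product type is the
  standard one of R^N; e1 corresponds to (1,0), so x . e1 = fst x.\<close>

definition usc :: "('a::topological_space \<Rightarrow> real) \<Rightarrow> bool" where
  "usc u \<longleftrightarrow> (\<forall>x t. u x < t \<longrightarrow> eventually (\<lambda>y. u y < t) (at x))"

definition C11_at :: "('a::real_inner \<Rightarrow> real) \<Rightarrow> 'a \<Rightarrow> 'a \<Rightarrow> bool" where
  "C11_at \<phi> x0 p \<longleftrightarrow> (\<exists>M \<eta>0. M > 0 \<and> \<eta>0 > 0 \<and>
      (\<forall>x. norm x < \<eta>0 \<longrightarrow> \<bar>\<phi> (x0 + x) - \<phi> x0 - inner p x\<bar> \<le> M * (norm x)\<^sup>2))"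

definition ext_int :: "(real \<Rightarrow> real) \<Rightarrow> ereal" where
  "ext_int f = enn2ereal (\<integral>\<^sup>+ \<eta>\<in>{0<..}. ennreal (max (f \<eta>) 0) \<partial>lborel)
             - enn2ereal (\<integral>\<^sup>+ \<eta>\<in>{0<..}. ennreal (max (- f \<eta>) 0) \<partial>lborel)"

text \<open>Infinity fractional Laplacian at x, where p is the gradient nabla phi(x).\<close>
definition finf_lap :: "real \<Rightarrow> ('a::real_inner \<Rightarrow> real) \<Rightarrow> 'a \<Rightarrow> 'a \<Rightarrow> ereal" where
  "finf_lap s \<phi> x p =
     (if p \<noteq> 0 then
        (let v = p /\<^sub>R norm p in
          ext_int (\<lambda>\<eta>. (\<phi> (x + \<eta> *\<^sub>R v) + \<phi> (x - \<eta> *\<^sub>R v) - 2 * \<phi> x) / \<eta> powr (1 + 2 * s)))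
      else
        (SUP y\<in>sphere 0 1. ext_int (\<lambda>\<eta>. (\<phi> (x + \<eta> *\<^sub>R y) - \<phi> x) / \<eta> powr (1 + 2 * s)))
        + (INF z\<in>sphere 0 1. ext_int (\<lambda>\<eta>. (\<phi> (x - \<eta> *\<^sub>R z) - \<phi> x) / \<eta> powr (1 + 2 * s))))"

definition subsol_at :: "real \<Rightarrow> ('a::real_inner \<Rightarrow> real) \<Rightarrow> 'a \<Rightarrow> bool" where
  "subsol_at s u x0 \<longleftrightarrow>
     (\<forall>r \<phi> p. r > 0 \<longrightarrow> C11_at \<phi> x0 p \<longrightarrow> continuous_on (cball x0 r) \<phi> \<longrightarrow>
        \<phi> x0 = u x0 \<longrightarrow> (\<forall>x\<in>ball x0 r - {x0}. \<phi> x > u x) \<longrightarrow>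
        finf_lap s (\<lambda>x. if x \<in> ball x0 r then \<phi> x else u x) x0 p \<ge> 0)"

definition Omega :: "(real^'m::finite \<Rightarrow> real) \<Rightarrow> (real^'m \<Rightarrow> real) \<Rightarrow> (real \<times> (real^'m)) set" where
  "Omega \<Gamma>1 \<Gamma>2 = {x. \<Gamma>1 (snd x) < fst x \<and> fst x < \<Gamma>2 (snd x)}"

text \<open>The family F (note Omega union Omega^{c,+} = {x1 > Gamma1(xhat)} since Gamma1 \<le> Gamma2).\<close>
definition famF :: "real \<Rightarrow> (real^'m::finite \<Rightarrow> real) \<Rightarrow> (real^'m \<Rightarrow> real) \<Rightarrow> (real \<times> (real^'m) \<Rightarrow> real) set" where
  "famF s \<Gamma>1 \<Gamma>2 = {u. usc u \<and> continuous_on (Omega \<Gamma>1 \<Gamma>2) u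
      \<and> (\<forall>x\<in>Omega \<Gamma>1 \<Gamma>2. subsol_at s u x)
      \<and> (\<forall>x. fst x \<le> \<Gamma>1 (snd x) \<longrightarrow> u x \<le> 0)
      \<and> (\<forall>x. x \<in> Omega \<Gamma>1 \<Gamma>2 \<or> fst x \<ge> \<Gamma>2 (snd x) \<longrightarrow> u x \<le> 1)}"

definition Uf :: "real \<Rightarrow> (real^'m::finite \<Rightarrow> real) \<Rightarrow> (real^'m \<Rightarrow> real) \<Rightarrow> real \<times> (real^'m) \<Rightarrow> real" where
  "Uf s \<Gamma>1 \<Gamma>2 x = (SUP u\<in>famF s \<Gamma>1 \<Gamma>2. u x)"

text \<open>arccot on (0,infinity) with values in (0, pi/2).\<close>
definition arccot :: "real \<Rightarrow> real" where
  "arccot L = pi / 2 - arctan L"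

definition Cplus :: "real \<Rightarrow> (real \<times> (real^'m::finite)) set" where
  "Cplus L = {y. y \<noteq> 0 \<and> cos (arccot L) < fst y / norm y \<and> fst y / norm y \<le> 1}"

end

theory Submission
  imports Defs
begin

lemma ext_int_mono:
  assumes "\<And>\<eta>. f \<eta> \<le> g \<eta>" shows "ext_int f \<le> ext_int g"
  unfolding ext_int_def
proof (rule ereal_minus_mono)
  show "enn2ereal (\<integral>\<^sup>+ \<eta>\<in>{0<..}. ennreal (max (f \<eta>) 0) \<partial>lborel)
     \<le> enn2ereal (\<integral>\<^sup>+ \<eta>\<in>{0<..}. ennreal (max (g \<eta>) 0) \<partial>lborel)"
    unfolding less_eq_ennreal.rep_eq[symmetric] by (intro nn_integral_mono mult_right_mono ennreal_leI)
       (rule max.mono[OF assms order_refl], simp)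
  show "enn2ereal (\<integral>\<^sup>+ \<eta>\<in>{0<..}. ennreal (max (- g \<eta>) 0) \<partial>lborel)
     \<le> enn2ereal (\<integral>\<^sup>+ \<eta>\<in>{0<..}. ennreal (max (- f \<eta>) 0) \<partial>lborel)"
    unfolding less_eq_ennreal.rep_eq[symmetric] by (intro nn_integral_mono mult_right_mono ennreal_leI)
       (rule max.mono[OF _ order_refl], simp add: assms, simp)
qed

lemma ext_int_zero: "ext_int (\<lambda>_. 0) = 0"
  unfolding ext_int_def by simp

lemma ext_int_nonneg: "(\<And>\<eta>. 0 \<le> f \<eta>) \<Longrightarrow> 0 \<le> ext_int f"
  using ext_int_mono[of "\<lambda>_. 0" f] ext_int_zero by simp

lemma finf_mono:
  assumes "\<And>z. f z \<le> g z" "f x = g x"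
  shows "finf_lap s f x p \<le> finf_lap s g x p"
proof (cases "p = 0")
  case True
  show ?thesis unfolding finf_lap_def using True
    by (auto intro!: add_mono SUP_mono' INF_mono' ext_int_mono divide_right_mono
         simp: assms(2) assms(1) diff_right_mono)
next
  case False
  show ?thesis unfolding finf_lap_def Let_def using False
    by (auto intro!: ext_int_mono divide_right_mono add_mono diff_right_mono simp: assms)
qed

lemma finf_nonneg:
  fixes f :: "'a::real_inner \<Rightarrow> real"
  assumes "\<And>z. f x \<le> f z" and ex: "sphere (0::'a) 1 \<noteq> {}"
  shows "0 \<le> finf_lap s f x p"
proof (cases "p = 0")
  case True
  from ex obtain y0 where y0: "y0 \<in> sphere (0::'a) 1" by blast
  have a: "0 \<le> (SUP y\<in>sphere 0 1. ext_int (\<lambda>\<eta>. (f (x + \<eta> *\<^sub>R y) - f x) / \<eta> powr (1 + 2 * s)))"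
    by (rule SUP_upper2[OF y0], rule ext_int_nonneg) (use assms in auto)
  have b: "0 \<le> (INF z\<in>sphere 0 1. ext_int (\<lambda>\<eta>. (f (x - \<eta> *\<^sub>R z) - f x) / \<eta> powr (1 + 2 * s)))"
    by (rule INF_greatest, rule ext_int_nonneg) (use assms in auto)
  show ?thesis unfolding finf_lap_def using True a b by simp
next
  case False
  show ?thesis unfolding finf_lap_def Let_def using False
    by (auto intro!: ext_int_nonneg divide_nonneg_nonneg simp: assms) (smt (verit) assms(1))
qed

lemma finf_shift:
  "finf_lap s (\<lambda>z. h (z + y)) x' p = finf_lap s h (x' + y) p"
  unfolding finf_lap_def Let_def by (simp add: algebra_simps)

lemma C11_shift: "C11_at \<phi> x0 p \<Longrightarrow> C11_at (\<lambda>z. \<phi> (z + y)) (x0 - y) p"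
  unfolding C11_at_def by (simp add: algebra_simps)

lemma ev_shift:
  fixes x y :: "'a::real_normed_vector"
  assumes "eventually P (at (x - y))" shows "eventually (\<lambda>z. P (z - y)) (at x)"
proof -
  from assms obtain d where d: "d > 0" "\<And>z. z \<noteq> x - y \<Longrightarrow> dist z (x - y) < d \<Longrightarrow> P z"
    unfolding eventually_at by auto
  show ?thesis unfolding eventually_at
    by (rule exI[of _ d]) (use d in \<open>auto simp: dist_norm algebra_simps\<close>)
qed


lemma cone_real:
  fixes L a n m :: real
  assumes L: "0 < L" and n: "n > 0" and c: "L / sqrt (1 + L\<^sup>2) < a / n"
    and nn: "n\<^sup>2 = a\<^sup>2 + m\<^sup>2" and m: "m \<ge> 0"
  shows "L * m < a"
proof -
  have sq: "sqrt (1 + L\<^sup>2) > 0" by (simp add: add_pos_nonneg)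
  have "L / sqrt (1 + L\<^sup>2) * n < a" using c n by (simp add: pos_less_divide_eq)
  hence h: "L * n < a * sqrt (1 + L\<^sup>2)" using sq by (simp add: field_simps)
  have a: "a > 0"
  proof -
    have "0 \<le> L * n" using L n by simp
    hence "0 < a * sqrt (1 + L\<^sup>2)" using h by linarith
    thus ?thesis using sq by (simp add: zero_less_mult_iff)
  qed
  have "(L * n)\<^sup>2 < (a * sqrt (1 + L\<^sup>2))\<^sup>2"
    using h L n by (intro power_strict_mono) auto
  hence "L\<^sup>2 * n\<^sup>2 < a\<^sup>2 * (1 + L\<^sup>2)" by (simp add: power_mult_distrib)
  hence "(L * m)\<^sup>2 < a\<^sup>2" using nn by (simp add: power_mult_distrib algebra_simps)
  thus ?thesis using a power2_less_imp_less[of "L*m" a] by linarith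
qed

lemma cone_fact:
  fixes L :: real and y :: "real \<times> (real^'m::finite)"
  assumes L: "0 < L" and y: "y \<in> Cplus L"
  shows "fst y > L * norm (snd y)"
proof -
  have yn: "y \<noteq> 0" and c: "cos (arccot L) < fst y / norm y" using y unfolding Cplus_def by auto
  have cs: "cos (arccot L) = L / sqrt (1 + L\<^sup>2)"
    unfolding arccot_def by (simp add: cos_sin_eq sin_arctan)
  have ny: "norm y > 0" using yn by simp
  have nn: "(norm y)\<^sup>2 = (fst y)\<^sup>2 + (norm (snd y))\<^sup>2"
  proof -
    have "norm y = sqrt ((norm (fst y))\<^sup>2 + (norm (snd y))\<^sup>2)"
      using norm_Pair[of "fst y" "snd y"] by simp
    thus ?thesis by simp
  qed
  show ?thesis
    by (rule cone_real[OF L ny _ nn norm_ge_zero]) (use c cs in simp)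
qed

lemma ball_shift: "(z \<in> ball (a - y) r) = (z + y \<in> ball a (r::real))"
  for z a y :: "'a::real_normed_vector"
  unfolding mem_ball dist_norm by (simp add: algebra_simps)
lemma cball_shift: "(z \<in> cball (a - y) r) = (z + y \<in> cball a (r::real))"
  for z a y :: "'a::real_normed_vector"
  unfolding mem_cball dist_norm by (simp add: algebra_simps)

theorem proposition4p3:
  fixes s M m L :: real
    and \<Gamma>1 \<Gamma>2 :: "real^'m::finite \<Rightarrow> real"
  assumes s: "1/2 < s" "s < 1"
    and Mm: "0 < m" "m < M"
    and bnd: "\<And>z. 0 \<le> \<Gamma>1 z" "\<And>z. \<Gamma>1 z \<le> \<Gamma>2 z" "\<And>z. \<Gamma>2 z \<le> M"
      "\<And>z. \<Gamma>2 z - \<Gamma>1 z \<ge> m"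
    and reg: "\<exists>C1 d1 d2. (\<forall>z. (\<Gamma>1 has_derivative (\<lambda>h. \<Sum>k\<in>UNIV. d1 k z * h $ k)) (at z))
        \<and> (\<forall>z. (\<Gamma>2 has_derivative (\<lambda>h. \<Sum>k\<in>UNIV. d2 k z * h $ k)) (at z))
        \<and> (\<forall>k z. \<bar>d1 k z\<bar> \<le> C1 \<and> \<bar>d2 k z\<bar> \<le> C1)
        \<and> (\<forall>k z w. \<bar>d1 k z - d1 k w\<bar> \<le> C1 * norm (z - w) \<and> \<bar>d2 k z - d2 k w\<bar> \<le> C1 * norm (z - w))"
    and L: "0 < L" "\<And>z w. \<bar>\<Gamma>1 z - \<Gamma>1 w\<bar> \<le> L * norm (z - w)"
      "\<And>z w. \<bar>\<Gamma>2 z - \<Gamma>2 w\<bar> \<le> L * norm (z - w)"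
  shows "\<forall>x. \<forall>y\<in>Cplus L. Uf s \<Gamma>1 \<Gamma>2 (x + y) \<ge> Uf s \<Gamma>1 \<Gamma>2 x"
proof (intro allI ballI)
  fix x y :: "real \<times> (real^'m)"
  assume y: "y \<in> Cplus L"
  define F where "F = famF s \<Gamma>1 \<Gamma>2"
  define \<Omega> where "\<Omega> = Omega \<Gamma>1 \<Gamma>2"
  have yc: "fst y > L * norm (snd y)" by (rule cone_fact[OF L(1) y])
  have below: "fst (z - y) < \<Gamma>1 (snd (z - y))" if "fst z \<le> \<Gamma>1 (snd z)" for z
  proof -
    have "\<bar>\<Gamma>1 (snd z) - \<Gamma>1 (snd z - snd y)\<bar> \<le> L * norm (snd y)"
      using L(2)[of "snd z" "snd z - snd y"] by simp
    thus ?thesis using that yc by simp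
  qed
  have above: "fst (z - y) < \<Gamma>2 (snd (z - y))" if "z \<in> \<Omega>" for z
  proof -
    have "\<bar>\<Gamma>2 (snd z) - \<Gamma>2 (snd z - snd y)\<bar> \<le> L * norm (snd y)"
      using L(3)[of "snd z" "snd z - snd y"] by simp
    thus ?thesis using that yc by (auto simp: \<Omega>_def Omega_def abs_le_iff)
  qed
  obtain d1 d2 where
    dd: "\<And>z. (\<Gamma>1 has_derivative (\<lambda>h. \<Sum>k\<in>UNIV. d1 k z * h $ k)) (at z)"
        "\<And>z. (\<Gamma>2 has_derivative (\<lambda>h. \<Sum>k\<in>UNIV. d2 k z * h $ k)) (at z)"
    using reg by blast
  have c1: "isCont \<Gamma>1 z" for z using has_derivative_continuous[OF dd(1)] .
  have c2: "isCont \<Gamma>2 z" for z using has_derivative_continuous[OF dd(2)] .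
  have cc1: "continuous_on UNIV (\<lambda>x::real \<times> (real^'m). \<Gamma>1 (snd x))"
    by (intro continuous_at_imp_continuous_on ballI isCont_o2[OF _ c1]) (intro continuous_intros)
  have cc2: "continuous_on UNIV (\<lambda>x::real \<times> (real^'m). \<Gamma>2 (snd x))"
    by (intro continuous_at_imp_continuous_on ballI isCont_o2[OF _ c2]) (intro continuous_intros)
  have openO: "open \<Omega>"
  proof -
    have "\<Omega> = {x. \<Gamma>1 (snd x) < fst x} \<inter> {x. fst x < \<Gamma>2 (snd x)}"
      by (auto simp: \<Omega>_def Omega_def)
    moreover have "open {x::real \<times> (real^'m). \<Gamma>1 (snd x) < fst x}"
      by (rule open_Collect_less[OF cc1]) (intro continuous_intros)
    moreover have "open {x::real \<times> (real^'m). fst x < \<Gamma>2 (snd x)}"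
      by (rule open_Collect_less[OF _ cc2]) (intro continuous_intros)
    ultimately show ?thesis by auto
  qed
  have le1: "u z \<le> 1" if "u \<in> F" for u z
  proof -
    have b0: "\<And>x. fst x \<le> \<Gamma>1 (snd x) \<Longrightarrow> u x \<le> 0"
      and b1: "\<And>x. x \<in> \<Omega> \<or> fst x \<ge> \<Gamma>2 (snd x) \<Longrightarrow> u x \<le> 1"
      using that by (auto simp: F_def famF_def \<Omega>_def)
    show ?thesis
    proof (cases "fst z \<le> \<Gamma>1 (snd z)")
      case True thus ?thesis using b0[of z] by simp
    next
      case False thus ?thesis using b1[of z] by (force simp: \<Omega>_def Omega_def)
    qed
  qed
  have sph: "sphere (0::real \<times> (real^'m)) 1 \<noteq> {}"
  proof -
    have "(1::real, 0::real^'m) \<in> sphere 0 1" by simp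
    thus ?thesis by blast
  qed
  have wF: "(\<lambda>z. max (u (z - y)) 0) \<in> F" if uF: "u \<in> F" for u
  proof -
    define w where "w = (\<lambda>z. max (u (z - y)) 0)"
    have uusc: "usc u" and ucont: "continuous_on \<Omega> u" and usub: "\<forall>x\<in>\<Omega>. subsol_at s u x"
      and b0: "\<And>x. fst x \<le> \<Gamma>1 (snd x) \<Longrightarrow> u x \<le> 0"
      using uF by (auto simp: F_def famF_def \<Omega>_def)
    have inO: "z - y \<in> \<Omega>" if "z \<in> \<Omega>" "u (z - y) > 0" for z
    proof -
      have "\<not> fst (z - y) \<le> \<Gamma>1 (snd (z - y))" using b0[of "z - y"] that(2) by linarith
      thus ?thesis using above[OF that(1)] by (simp add: \<Omega>_def Omega_def)
    qed
    have w_usc: "usc w"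
      unfolding usc_def
    proof (intro allI impI)
      fix z t assume "w z < t"
      hence ut: "u (z - y) < t" and t: "0 < t" by (auto simp: w_def)
      have "eventually (\<lambda>v. u v < t) (at (z - y))" using uusc ut unfolding usc_def by blast
      from ev_shift[OF this] show "eventually (\<lambda>v. w v < t) (at z)"
        by (rule eventually_mono) (use t in \<open>simp add: w_def\<close>)
    qed
    have w_cont: "continuous_on \<Omega> w"
    proof -
      have "isCont w z" if zO: "z \<in> \<Omega>" for z
      proof (cases "u (z - y) > 0")
        case True
        have "isCont u (z - y)"
          using ucont openO inO[OF zO True] continuous_on_eq_continuous_at by blast
        hence "isCont (\<lambda>v. u (v - y)) z"
          by (intro isCont_o2[where f="\<lambda>v. v - y" and g=u]) (auto intro: continuous_intros)
        thus ?thesis unfolding w_def by (intro continuous_intros)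
      next
        case False
        hence wz: "w z = 0" by (simp add: w_def)
        show ?thesis unfolding isCont_def wz order_tendsto_iff
        proof (intro conjI allI impI)
          fix a :: real assume "a < 0"
          thus "eventually (\<lambda>v. a < w v) (at z)" by (intro always_eventually allI) (simp add: w_def less_max_iff_disj)
        next
          fix a :: real assume a: "0 < a"
          have "u (z - y) < a" using False a by linarith
          hence "eventually (\<lambda>v. u v < a) (at (z - y))" using uusc
            unfolding usc_def by blast
          from ev_shift[OF this] show "eventually (\<lambda>v. w v < a) (at z)"
            by (rule eventually_mono) (use a in \<open>simp add: w_def\<close>)
        qed
      qed
      thus ?thesis using openO continuous_on_eq_continuous_at by blast
    qed
    have w_sub: "subsol_at s w x0" if x0: "x0 \<in> \<Omega>" for x0
      unfolding subsol_at_def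
    proof (intro allI impI)
      fix r \<phi> p
      assume r: "0 < r" and C: "C11_at \<phi> x0 p" and cphi: "continuous_on (cball x0 r) \<phi>"
        and eq: "\<phi> x0 = w x0" and gt: "\<forall>x\<in>ball x0 r - {x0}. w x < \<phi> x"
      define W where "W = (\<lambda>x. if x \<in> ball x0 r then \<phi> x else w x)"
      have Wge: "w z \<le> W z" for z
        using gt eq by (cases "z = x0") (auto simp: W_def less_imp_le)
      have Wx0: "W x0 = \<phi> x0" using r by (simp add: W_def)
      show "0 \<le> finf_lap s W x0 p"
      proof (cases "u (x0 - y) > 0")
        case False
        hence "w x0 = 0" by (simp add: w_def)
        hence "W x0 \<le> W z" for z using Wge[of z] Wx0 eq by (simp add: w_def)
        thus ?thesis using finf_nonneg[OF _ sph] by blast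
      next
        case True
        have x0y: "x0 - y \<in> \<Omega>" by (rule inO[OF x0 True])
        define V where "V = (\<lambda>z. if z \<in> ball (x0 - y) r then \<phi> (z + y) else u z)"
        have "subsol_at s u (x0 - y)" using usub x0y by blast
        hence imp: "C11_at (\<lambda>z. \<phi> (z + y)) (x0 - y) p \<longrightarrow>
            continuous_on (cball (x0 - y) r) (\<lambda>z. \<phi> (z + y)) \<longrightarrow>
            \<phi> (x0 - y + y) = u (x0 - y) \<longrightarrow>
            (\<forall>z\<in>ball (x0 - y) r - {x0 - y}. \<phi> (z + y) > u z) \<longrightarrow>
            finf_lap s V (x0 - y) p \<ge> 0"
          unfolding subsol_at_def V_def using r by blast
        have h1: "C11_at (\<lambda>z. \<phi> (z + y)) (x0 - y) p" by (rule C11_shift[OF C])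
        have h2: "continuous_on (cball (x0 - y) r) (\<lambda>z. \<phi> (z + y))"
          proof (rule continuous_on_compose2[OF cphi])
          show "continuous_on (cball (x0 - y) r) (\<lambda>z. z + y)" by (intro continuous_intros)
          show "(\<lambda>z. z + y) ` cball (x0 - y) r \<subseteq> cball x0 r"
          proof
            fix v assume "v \<in> (\<lambda>z. z + y) ` cball (x0 - y) r"
            then obtain z where "z \<in> cball (x0 - y) r" "v = z + y" by blast
            thus "v \<in> cball x0 r" using cball_shift[of z x0 y r] by simp
          qed
        qed
        have h3: "\<phi> (x0 - y + y) = u (x0 - y)" using eq True by (simp add: w_def)
        have h4: "\<forall>z\<in>ball (x0 - y) r - {x0 - y}. \<phi> (z + y) > u z"
        proof
          fix z assume z: "z \<in> ball (x0 - y) r - {x0 - y}"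
          hence "z + y \<in> ball x0 r - {x0}" using ball_shift[of z x0 y r] by auto
          hence "\<phi> (z + y) > w (z + y)" using gt by blast
          thus "\<phi> (z + y) > u z" by (simp add: w_def)
        qed
        have V0: "0 \<le> finf_lap s V (x0 - y) p" using imp h1 h2 h3 h4 by blast
        have "finf_lap s V (x0 - y) p \<le> finf_lap s (\<lambda>z. W (z + y)) (x0 - y) p"
        proof (rule finf_mono)
          fix z show "V z \<le> W (z + y)"
            using ball_shift[of z x0 y r] by (auto simp: V_def W_def w_def)
        next
          show "V (x0 - y) = W (x0 - y + y)" using r by (simp add: V_def W_def)
        qed
        also have "\<dots> = finf_lap s W x0 p" by (simp add: finf_shift)
        finally show ?thesis using V0 by simp
      qed
    qed
    have w0: "w z \<le> 0" if "fst z \<le> \<Gamma>1 (snd z)" for z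
      using b0[of "z - y"] below[OF that] by (simp add: w_def)
    have w1: "w z \<le> 1" for z using le1[OF uF, of "z - y"] by (simp add: w_def)
    show ?thesis
      unfolding F_def famF_def w_def[symmetric]
      using w_usc w_cont w_sub w0 w1 by (auto simp: \<Omega>_def)
  qed
  show "Uf s \<Gamma>1 \<Gamma>2 x \<le> Uf s \<Gamma>1 \<Gamma>2 (x + y)"
  proof (cases "F = {}")
    case True thus ?thesis by (simp add: Uf_def F_def)
  next
    case False
    have "(SUP u\<in>F. u x) \<le> (SUP u\<in>F. u (x + y))"
    proof (rule cSUP_mono[OF False])
      show "bdd_above ((\<lambda>u. u (x + y)) ` F)" by (rule bdd_aboveI2[where M=1], rule le1)
      fix u assume "u \<in> F"
      thus "\<exists>v\<in>F. u x \<le> v (x + y)"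
        by (intro bexI[OF _ wF]) auto
    qed
    thus ?thesis by (simp add: Uf_def F_def)
  qed
qed

end
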